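(* Let $X_1, X_2, \ldots$ be independent random variables, each uniformly distributed on $[-1,1]$, and let $\varepsilon \in (0, 1/3)$. For $t \ge 0$ and $z \in \mathbb{R}$, let $f_t(z) = 1$ if there exists $S \subseteq \{1,\dots,t\}$ with $\lvert z - \sum_{i \in S} X_i \rvert < \varepsilon$, and $f_t(z) = 0$ otherwise; let $v_t = \frac{1}{2}\int_{-1}^{1} f_t(z)\,\mathrm{d}z$, let $\tau_1 = \min\{t \ge 0 : v_t > 1/2\}$, for $t \ge 0$ let $w_t = 1 - v_{\tau_1+t}$, let $\tau_2 = \min\{t \ge 0 : w_t \le \varepsilon/2\}$, and let $\tau = \tau_1 + \tau_2$ (the first time at which $v_t \ge 1 - \varepsilon/2$). There exist constants $C' > 0$ and $\kappa > 0$ (not depending on $\varepsilon$) such that for every $t \ge C' \log\frac{1}{\varepsilon}$, $$\Pr[\tau \le t] \ge 1 - 2\exp\left[-\frac{1}{\kappa t}\left(t - C'\log\frac{1}{\varepsilon}\right)^2\right].$$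
   Context: $f_t$ is the indicator that $z$ can be approximated to within error strictly less than $\varepsilon$ by a subset sum of the first $t$ variables (the empty sum being $0$); $v_t$ is the fraction of $[-1,1]$ so approximated. $\log$ denotes the natural logarithm. *)

theory Defs
  imports "HOL-Probability.Probability"
begin

definition approx_t :: "real \<Rightarrow> (nat \<Rightarrow> 'a \<Rightarrow> real) \<Rightarrow> nat \<Rightarrow> 'a \<Rightarrow> real \<Rightarrow> bool" where
  "approx_t eps X t \<omega> z = (\<exists>S \<subseteq> {1..t}. \<bar>z - (\<Sum>i\<in>S. X i \<omega>)\<bar> < eps)"

definition f_t :: "real \<Rightarrow> (nat \<Rightarrow> 'a \<Rightarrow> real) \<Rightarrow> nat \<Rightarrow> 'a \<Rightarrow> real \<Rightarrow> real" where
  "f_t eps X t \<omega> z = (if approx_t eps X t \<omega> z then 1 else 0)"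

definition v_t :: "real \<Rightarrow> (nat \<Rightarrow> 'a \<Rightarrow> real) \<Rightarrow> nat \<Rightarrow> 'a \<Rightarrow> real" where
  "v_t eps X t \<omega> = (1/2) * (LBINT z=-1..1. f_t eps X t \<omega> z)"

definition hit_time :: "(nat \<Rightarrow> bool) \<Rightarrow> enat" where
  "hit_time P = (if \<exists>t. P t then enat (LEAST t. P t) else \<infinity>)"

definition tau1 :: "real \<Rightarrow> (nat \<Rightarrow> 'a \<Rightarrow> real) \<Rightarrow> 'a \<Rightarrow> enat" where
  "tau1 eps X \<omega> = hit_time (\<lambda>t. v_t eps X t \<omega> > 1/2)"

definition tau :: "real \<Rightarrow> (nat \<Rightarrow> 'a \<Rightarrow> real) \<Rightarrow> 'a \<Rightarrow> enat" where
  "tau eps X \<omega> = (case tau1 eps X \<omega> of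
      enat t1 \<Rightarrow> enat t1 + hit_time (\<lambda>t. 1 - v_t eps X (t1 + t) \<omega> \<le> eps / 2)
    | \<infinity> \<Rightarrow> \<infinity>)"

end

theory Submission
  imports Defs "HOL-Probability.Probability"
begin

definition AS :: "real \<Rightarrow> (nat \<Rightarrow> real) \<Rightarrow> nat \<Rightarrow> real set" where
  "AS eps x t = {z. \<exists>S\<subseteq>{1..t}. \<bar>z - (\<Sum>i\<in>S. x i)\<bar> < eps}"

definition bm :: "real \<Rightarrow> (nat \<Rightarrow> real) \<Rightarrow> nat \<Rightarrow> real" where
  "bm eps x t = measure lborel (AS eps x t \<inter> {-1<..<1})"

lemma AS_eq_UN: "AS eps x t = (\<Union>S\<in>Pow {1..t}. ball (\<Sum>i\<in>S. x i) eps)"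
  by (auto simp: AS_def dist_real_def abs_minus_commute)

lemma AS_open: "open (AS eps x t)"
  unfolding AS_eq_UN by auto

lemma AS_sets[measurable]: "AS eps x t \<in> sets borel"
  using AS_open by auto

lemma AS_int_sets[measurable]: "AS eps x t \<inter> {-1<..<1} \<in> sets lborel"
  by simp

lemma emeasure_AS_fin: "emeasure lborel (AS eps x t \<inter> {-1<..<1}) \<le> 2"
proof -
  have "emeasure lborel (AS eps x t \<inter> {-1<..<1}) \<le> emeasure lborel {-1<..<(1::real)}"
    by (intro emeasure_mono) auto
  then show ?thesis by simp
qed

lemma AS_fmeas: "AS eps x t \<inter> {-1<..<1} \<in> fmeasurable lborel"
  using emeasure_AS_fin[of eps x t] by (auto simp: fmeasurable_def intro: order.strict_trans1[of _ 2])

lemma AS_mono: assumes "s \<le> t" shows "AS eps x s \<subseteq> AS eps x t"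
proof
  fix z assume "z \<in> AS eps x s"
  then obtain S where "S \<subseteq> {1..s}" "\<bar>z - (\<Sum>i\<in>S. x i)\<bar> < eps" unfolding AS_def by auto
  moreover have "{1..s} \<subseteq> {1..t}" using assms by auto
  ultimately show "z \<in> AS eps x t" unfolding AS_def by blast
qed

lemma AS_zero: "{-eps<..<eps} \<subseteq> AS eps x t"
  unfolding AS_def by (auto intro!: exI[of _ "{}"])

lemma AS_cong: "(\<And>i. i \<in> {1..t} \<Longrightarrow> x i = y i) \<Longrightarrow> AS eps x t = AS eps y t"
  unfolding AS_def
  apply (rule Collect_cong)
  apply (rule ex_cong1)
  apply (metis (no_types, lifting) subset_iff sum.cong)
  done

lemma AS_Suc: "z - x (Suc t) \<in> AS eps x t \<Longrightarrow> z \<in> AS eps x (Suc t)"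
proof -
  assume "z - x (Suc t) \<in> AS eps x t"
  then obtain S where S: "S \<subseteq> {1..t}" "\<bar>z - x (Suc t) - (\<Sum>i\<in>S. x i)\<bar> < eps"
    unfolding AS_def by auto
  have fin: "finite S" using S(1) finite_subset by blast
  have nS: "Suc t \<notin> S" using S(1) by auto
  have "insert (Suc t) S \<subseteq> {1..Suc t}" using S(1) by auto
  moreover have "(\<Sum>i\<in>insert (Suc t) S. x i) = x (Suc t) + (\<Sum>i\<in>S. x i)"
    using fin nS by simp
  ultimately show ?thesis using S(2) unfolding AS_def
    by (intro CollectI exI[of _ "insert (Suc t) S"]) (auto simp: algebra_simps)
qed

lemma bm_mono: "s \<le> t \<Longrightarrow> bm eps x s \<le> bm eps x t"
  unfolding bm_def
  by (intro measure_mono_fmeasurable AS_fmeas) (use AS_mono[of s t eps x] in auto)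

lemma bm_le2: "bm eps x t \<le> 2"
proof -
  have "bm eps x t \<le> measure lborel {-1<..<(1::real)}"
    unfolding bm_def by (intro measure_mono_fmeasurable) (auto simp: fmeasurable_def)
  then show ?thesis by simp
qed

lemma bm_ge: assumes "0 < eps" "eps \<le> 1" shows "2 * eps \<le> bm eps x t"
proof -
  have "measure lborel {-eps<..<eps} \<le> bm eps x t"
    unfolding bm_def using AS_zero[of eps x t] assms
    by (intro measure_mono_fmeasurable AS_fmeas) auto
  then show ?thesis using assms by simp
qed

lemma approx_AS: "approx_t eps X t \<omega> z \<longleftrightarrow> z \<in> AS eps (\<lambda>i. X i \<omega>) t"
  unfolding approx_t_def AS_def by simp

lemma m1: "- (1::ereal) = ereal (-1)" by (simp add: one_ereal_def)

lemma v_t_bm: "v_t eps X t \<omega> = bm eps (\<lambda>i. X i \<omega>) t / 2"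
proof -
  have f: "f_t eps X t \<omega> = indicator (AS eps (\<lambda>i. X i \<omega>) t)"
    by (auto simp: f_t_def approx_AS fun_eq_iff split: split_indicator)
  have e: "einterval (-1) 1 = {-1<..<(1::real)}"
    by (auto simp: einterval_def m1)
  have "(LBINT z=-1..1. f_t eps X t \<omega> z) = (LINT z|lborel. indicator {-1<..<1} z *\<^sub>R indicator (AS eps (\<lambda>i. X i \<omega>) t) z)"
    unfolding interval_lebesgue_integral_def set_lebesgue_integral_def f e by (simp add: m1)
  also have "\<dots> = (LINT z|lborel. indicator (AS eps (\<lambda>i. X i \<omega>) t \<inter> {-1<..<1}) z)"
    by (intro Bochner_Integration.integral_cong) (auto split: split_indicator)
  also have "\<dots> = bm eps (\<lambda>i. X i \<omega>) t"
    unfolding bm_def by simp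
  finally show ?thesis unfolding v_t_def by simp
qed

lemma v_mono: "s \<le> t \<Longrightarrow> v_t eps X s \<omega> \<le> v_t eps X t \<omega>"
  unfolding v_t_bm using bm_mono by (simp add: divide_right_mono)

lemma tau_iff:
  assumes "0 < eps" "eps < 1/3"
  shows "tau eps X \<omega> \<le> enat t \<longleftrightarrow> 1 - eps/2 \<le> v_t eps X t \<omega>"
proof
  assume H: "1 - eps/2 \<le> v_t eps X t \<omega>"
  have ex1: "\<exists>s. v_t eps X s \<omega> > 1/2" using H assms by (intro exI[of _ t]) auto
  define t1 where "t1 = (LEAST s. v_t eps X s \<omega> > 1/2)"
  have t1le: "t1 \<le> t" unfolding t1_def using H assms by (intro Least_le) auto
  have tau1: "tau1 eps X \<omega> = enat t1" unfolding tau1_def hit_time_def t1_def using ex1 by simp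
  have ex2: "\<exists>s. 1 - v_t eps X (t1 + s) \<omega> \<le> eps / 2"
    using H t1le by (intro exI[of _ "t - t1"]) auto
  define s0 where "s0 = (LEAST s. 1 - v_t eps X (t1 + s) \<omega> \<le> eps / 2)"
  have s0le: "s0 \<le> t - t1" unfolding s0_def using H t1le by (intro Least_le) auto
  have "tau eps X \<omega> = enat t1 + enat s0"
    unfolding tau_def tau1 hit_time_def s0_def using ex2 by simp
  then show "tau eps X \<omega> \<le> enat t" using s0le t1le by simp
next
  assume H: "tau eps X \<omega> \<le> enat t"
  show "1 - eps/2 \<le> v_t eps X t \<omega>"
  proof (cases "tau1 eps X \<omega>")
    case (enat t1)
    show ?thesis
    proof (cases "\<exists>s. 1 - v_t eps X (t1 + s) \<omega> \<le> eps / 2")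
      case True
      define s0 where "s0 = (LEAST s. 1 - v_t eps X (t1 + s) \<omega> \<le> eps / 2)"
      have p: "1 - v_t eps X (t1 + s0) \<omega> \<le> eps / 2"
        unfolding s0_def using True by (rule LeastI_ex)
      have "tau eps X \<omega> = enat t1 + enat s0"
        unfolding tau_def enat hit_time_def s0_def using True by simp
      then have "t1 + s0 \<le> t" using H by simp
      then have "v_t eps X (t1 + s0) \<omega> \<le> v_t eps X t \<omega>" by (rule v_mono)
      then show ?thesis using p by simp
    next
      case False
      then have "tau eps X \<omega> = \<infinity>"
        unfolding tau_def enat hit_time_def by simp
      then show ?thesis using H by simp
    qed
  next
    case infinity
    then have "tau eps X \<omega> = \<infinity>" unfolding tau_def by simp
    then show ?thesis using H by simp
  qed
qed

lemma tau_iff_bm: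
  assumes "0 < eps" "eps < 1/3"
  shows "tau eps X \<omega> \<le> enat t \<longleftrightarrow> 2 - eps \<le> bm eps (\<lambda>i. X i \<omega>) t"
  unfolding tau_iff[OF assms] v_t_bm by auto

definition gE :: "real set \<Rightarrow> real set \<Rightarrow> real \<Rightarrow> ennreal" where
  "gE S T y = emeasure lborel {z. z \<in> T \<and> z - y \<in> S}"

lemma gE_int:
  fixes S T :: "real set"
  assumes [measurable]: "S \<in> sets borel" "T \<in> sets borel"
  shows "gE S T y = (\<integral>\<^sup>+z. indicator T z * indicator S (z - y) \<partial>lborel)"
proof -
  have "(\<integral>\<^sup>+z. indicator T z * indicator S (z - y) \<partial>lborel)
      = (\<integral>\<^sup>+z. indicator {z. z \<in> T \<and> z - y \<in> S} z \<partial>lborel)"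
    by (intro nn_integral_cong) (auto split: split_indicator)
  also have "\<dots> = gE S T y" unfolding gE_def by (intro nn_integral_indicator) measurable
  finally show ?thesis by simp
qed

lemma gE_meas[measurable]:
  fixes S T :: "real set"
  assumes [measurable]: "S \<in> sets borel" "T \<in> sets borel"
  shows "gE S T \<in> borel_measurable borel"
proof -
  have "(\<lambda>y. \<integral>\<^sup>+z. indicator T z * indicator S (z - y) \<partial>lborel) \<in> borel_measurable borel"
    by measurable
  then show ?thesis by (subst (asm) gE_int[OF assms, symmetric]) simp
qed

lemma conv1:
  fixes S T :: "real set"
  assumes [measurable]: "S \<in> sets borel" "T \<in> sets borel"
  shows "(\<integral>\<^sup>+y. indicator {-1..1} y * gE S T y \<partial>lborel)
       = (\<integral>\<^sup>+z. indicator T z * emeasure lborel (S \<inter> {z-1..z+1}) \<partial>lborel)"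
proof -
  have "(\<integral>\<^sup>+y. indicator {-1..1} y * gE S T y \<partial>lborel)
     = (\<integral>\<^sup>+y. (\<integral>\<^sup>+z. indicator {-1..1} y * (indicator T z * indicator S (z - y)) \<partial>lborel) \<partial>lborel)"
    by (intro nn_integral_cong) (simp add: gE_int nn_integral_cmult)
  also have "\<dots> = (\<integral>\<^sup>+z. (\<integral>\<^sup>+y. indicator {-1..1} y * (indicator T z * indicator S (z - y)) \<partial>lborel) \<partial>lborel)"
    by (intro lborel_pair.Fubini') measurable
  also have "\<dots> = (\<integral>\<^sup>+z. indicator T z * (\<integral>\<^sup>+y. indicator {-1..1} y * indicator S (z - y) \<partial>lborel) \<partial>lborel)"
    by (intro nn_integral_cong) (simp add: nn_integral_cmult[symmetric] ac_simps)
  also have "\<dots> = (\<integral>\<^sup>+z. indicator T z * emeasure lborel (S \<inter> {z-1..z+1}) \<partial>lborel)"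
  proof (intro nn_integral_cong)
    fix z :: real
    have "(\<integral>\<^sup>+y. indicator {-1..1} y * indicator S (z - y) \<partial>lborel)
        = ennreal \<bar>-1\<bar> * (\<integral>\<^sup>+w. indicator {-1..1} (z + (-1) * w) * indicator S (z - (z + (-1) * w)) \<partial>lborel)"
      by (rule nn_integral_real_affine) auto
    also have "\<dots> = (\<integral>\<^sup>+w. indicator (S \<inter> {z-1..z+1}) w \<partial>lborel)"
      unfolding abs_minus_cancel abs_one ennreal_1 mult_1
    by (intro nn_integral_cong) (auto split: split_indicator)
    also have "\<dots> = emeasure lborel (S \<inter> {z-1..z+1})" by simp
    finally show "indicator T z * (\<integral>\<^sup>+y. indicator {-1..1} y * indicator S (z - y) \<partial>lborel)
        = indicator T z * emeasure lborel (S \<inter> {z-1..z+1})" by simp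
  qed
  finally show ?thesis .
qed

lemma K_sym:
  fixes S T :: "real set"
  assumes [measurable]: "S \<in> sets borel" "T \<in> sets borel"
  shows "(\<integral>\<^sup>+z. indicator T z * emeasure lborel (S \<inter> {z-1..z+1}) \<partial>lborel)
       = (\<integral>\<^sup>+w. indicator S w * emeasure lborel (T \<inter> {w-1..w+1}) \<partial>lborel)"
proof -
  have mS: "S \<inter> {a..b} \<in> sets borel" "T \<inter> {a..b} \<in> sets borel" for a b :: real
    by (auto intro!: sets.Int)
  have e: "emeasure lborel (S \<inter> {z-1..z+1}) = (\<integral>\<^sup>+w. indicator S w * indicator {-1..1} (w - z) \<partial>lborel)" for z
  proof -
    have "emeasure lborel (S \<inter> {z-1..z+1}) = (\<integral>\<^sup>+w. indicator (S \<inter> {z-1..z+1}) w \<partial>lborel)"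
      using mS by simp
    also have "\<dots> = (\<integral>\<^sup>+w. indicator S w * indicator {-1..1} (w - z) \<partial>lborel)"
      by (intro nn_integral_cong) (auto split: split_indicator)
    finally show ?thesis .
  qed
  have e2: "emeasure lborel (T \<inter> {w-1..w+1}) = (\<integral>\<^sup>+z. indicator T z * indicator {-1..1} (w - z) \<partial>lborel)" for w
  proof -
    have "emeasure lborel (T \<inter> {w-1..w+1}) = (\<integral>\<^sup>+z. indicator (T \<inter> {w-1..w+1}) z \<partial>lborel)"
      using mS by simp
    also have "\<dots> = (\<integral>\<^sup>+z. indicator T z * indicator {-1..1} (w - z) \<partial>lborel)"
      by (intro nn_integral_cong) (auto split: split_indicator)
    finally show ?thesis .
  qed
  have "(\<integral>\<^sup>+z. indicator T z * emeasure lborel (S \<inter> {z-1..z+1}) \<partial>lborel)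
     = (\<integral>\<^sup>+z. (\<integral>\<^sup>+w. indicator T z * (indicator S w * indicator {-1..1} (w - z)) \<partial>lborel) \<partial>lborel)"
    by (intro nn_integral_cong) (simp add: e nn_integral_cmult)
  also have "\<dots> = (\<integral>\<^sup>+w. (\<integral>\<^sup>+z. indicator T z * (indicator S w * indicator {-1..1} (w - z)) \<partial>lborel) \<partial>lborel)"
    by (intro lborel_pair.Fubini'[symmetric]) measurable
  also have "\<dots> = (\<integral>\<^sup>+w. indicator S w * emeasure lborel (T \<inter> {w-1..w+1}) \<partial>lborel)"
    by (intro nn_integral_cong) (simp add: e2 nn_integral_cmult[symmetric] ac_simps)
  finally show ?thesis .
qed

lemma bnd_fmeas:
  fixes A :: "real set"
  assumes "A \<in> sets borel" "A \<subseteq> {-2..2}" shows "A \<in> fmeasurable lborel"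
proof -
  have "emeasure lborel A \<le> emeasure lborel {-2..2::real}"
    using assms by (intro emeasure_mono) auto
  then show ?thesis using assms by (auto simp: fmeasurable_def intro: order.strict_trans1)
qed

lemma mono_un:
  fixes A B C :: "real set"
  assumes "A \<in> sets borel" "B \<in> sets borel" "C \<in> sets borel" "B \<subseteq> {-2..2}" "C \<subseteq> {-2..2}"
    "A \<subseteq> B \<union> C"
  shows "measure lborel A \<le> measure lborel B + measure lborel C"
proof -
  have "measure lborel A \<le> measure lborel (B \<union> C)"
    using assms by (intro measure_mono_fmeasurable bnd_fmeas) auto
  also have "\<dots> \<le> measure lborel B + measure lborel C"
    using assms by (intro measure_Un_le) auto
  finally show ?thesis .
qed

lemma LB:
  fixes S :: "real set"
  assumes [measurable]: "S \<in> sets borel" and Ssub: "S \<subseteq> {-1<..<1}" and a1: "measure lborel S \<le> 1"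
  shows "ennreal (measure lborel S / 8)
     \<le> (\<integral>\<^sup>+z. indicator S z * emeasure lborel (({-1<..<1} - S) \<inter> {z-1..z+1}) \<partial>lborel)"
proof -
  define a where "a = measure lborel S"
  define T where "T = {-1<..<1} - S"
  define C where "C = {-(1-a/4)..1-a/4}"
  have a0: "0 \<le> a" unfolding a_def by simp
  have a1': "a \<le> 1" unfolding a_def by (rule a1)
  have [measurable]: "T \<in> sets borel" "C \<in> sets borel" unfolding T_def C_def by auto
  have Sf: "S \<in> fmeasurable lborel" using Ssub by (intro bnd_fmeas) auto
  have eS: "emeasure lborel S = ennreal a" unfolding a_def using Sf
    by (simp add: emeasure_eq_ennreal_measure fmeasurable_def less_top[symmetric])
  have mT: "measure lborel T = 2 - a"
  proof -
    have "measure lborel T = measure lborel {-1<..<1::real} - measure lborel S"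
      unfolding T_def using Ssub by (intro measure_Diff) auto
    then show ?thesis by (simp add: a_def)
  qed
  have pt: "(1 - a) + (a/4) * indicator C z \<le> measure lborel (T \<inter> {z-1..z+1})" if zS: "z \<in> S" for z
  proof -
    have z1: "\<bar>z\<bar> < 1" using zS Ssub by (auto simp: abs_less_iff)
    have "measure lborel ({-1<..<1} - {z-1..z+1}) \<le> \<bar>z\<bar>"
    proof (cases "0 \<le> z")
      case True
      have "measure lborel ({-1<..<1} - {z-1..z+1}) \<le> measure lborel {-1..z-1}"
        using True fmeasurable_cbox[of "-1" "z-1", unfolded cbox_interval]
        by (intro measure_mono_fmeasurable) auto
      then show ?thesis using True z1 by simp
    next
      case False
      have "measure lborel ({-1<..<1} - {z-1..z+1}) \<le> measure lborel {z+1..1}"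
        using False fmeasurable_cbox[of "z+1" "1", unfolded cbox_interval]
        by (intro measure_mono_fmeasurable) auto
      then show ?thesis using False z1 by simp
    qed
    moreover have "measure lborel T \<le> measure lborel (T \<inter> {z-1..z+1}) + measure lborel ({-1<..<1} - {z-1..z+1})"
      by (intro mono_un) (auto simp: T_def)
    ultimately have "2 - a - \<bar>z\<bar> \<le> measure lborel (T \<inter> {z-1..z+1})" using mT by simp
    moreover have "(1 - a) + (a/4) * indicator C z \<le> 2 - a - \<bar>z\<bar>"
      using z1 by (auto simp: C_def split: split_indicator)
    ultimately show ?thesis by simp
  qed
  have mSC: "a / 2 \<le> measure lborel (S \<inter> C)"
  proof -
    have "measure lborel S \<le> measure lborel (S \<inter> C) + measure lborel ({-1..-(1-a/4)} \<union> {1-a/4..1})"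
      using Ssub a0 a1' by (intro mono_un) (auto simp: C_def)
    moreover have "measure lborel ({-1..-(1-a/4)} \<union> {1-a/4..1::real}) \<le> measure lborel {-1..-(1-a/4)} + measure lborel {1-a/4..1::real}"
      by (intro measure_Un_le) auto
    ultimately show ?thesis using a0 unfolding a_def by simp
  qed
  have i1: "(\<integral>\<^sup>+z. ennreal (1-a) * indicator S z + ennreal (a/4) * indicator (S \<inter> C) z \<partial>lborel)
      \<le> (\<integral>\<^sup>+z. indicator S z * emeasure lborel (T \<inter> {z-1..z+1}) \<partial>lborel)"
  proof (intro nn_integral_mono)
    fix z
    show "ennreal (1-a) * indicator S z + ennreal (a/4) * indicator (S \<inter> C) z
        \<le> indicator S z * emeasure lborel (T \<inter> {z-1..z+1})"
    proof (cases "z \<in> S")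
      case True
      have fin: "T \<inter> {z-1..z+1} \<in> fmeasurable lborel"
        by (intro bnd_fmeas) (auto simp: T_def)
      have "ennreal (1-a) * indicator S z + ennreal (a/4) * indicator (S \<inter> C) z
          = ennreal ((1 - a) + (a/4) * indicator C z)"
        using True a0 a1 unfolding a_def[symmetric]
        by (auto split: split_indicator simp: ennreal_plus[symmetric] simp del: ennreal_plus)
      also have "\<dots> \<le> ennreal (measure lborel (T \<inter> {z-1..z+1}))"
        using pt[OF True] by (rule ennreal_leI)
      also have "\<dots> = indicator S z * emeasure lborel (T \<inter> {z-1..z+1})"
        using True fin by (simp add: emeasure_eq_ennreal_measure fmeasurable_def less_top[symmetric])
      finally show ?thesis .
    qed simp
  qed
  have i2: "(\<integral>\<^sup>+z. ennreal (1-a) * indicator S z + ennreal (a/4) * indicator (S \<inter> C) z \<partial>lborel)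
      = ennreal (1-a) * ennreal a + ennreal (a/4) * emeasure lborel (S \<inter> C)"
    by (subst nn_integral_add) (auto simp: nn_integral_cmult_indicator eS)
  have i3: "emeasure lborel (S \<inter> C) = ennreal (measure lborel (S \<inter> C))"
  proof -
    have "S \<inter> C \<in> fmeasurable lborel" using Ssub by (intro bnd_fmeas) auto
    then show ?thesis by (simp add: emeasure_eq_ennreal_measure fmeasurable_def less_top[symmetric])
  qed
  have i4: "ennreal (a / 8) \<le> ennreal (1-a) * ennreal a + ennreal (a/4) * ennreal (measure lborel (S \<inter> C))"
  proof -
    have "a / 8 \<le> (1-a) * a + (a/4) * measure lborel (S \<inter> C)"
    proof -
      have "(a/4) * (a/2) \<le> (a/4) * measure lborel (S \<inter> C)"
        using mSC a0 by (intro mult_left_mono) auto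
      moreover have "a / 8 \<le> (1-a) * a + (a/4) * (a/2)"
      proof -
        have aa: "a * a \<le> a" by (rule mult_left_le[OF a1' a0])
        have "(1-a) * a + (a/4) * (a/2) - a / 8 = (7/8) * (a - a * a)" by (simp add: algebra_simps)
        moreover have "0 \<le> (7/8) * (a - a * a)" using aa by simp
        ultimately show ?thesis by linarith
      qed
      ultimately show ?thesis by simp
    qed
    then show ?thesis using a0 a1 unfolding a_def[symmetric]
      by (simp add: ennreal_mult[symmetric] ennreal_plus[symmetric] del: ennreal_plus)
  qed
  have "ennreal (a / 8) \<le> (\<integral>\<^sup>+z. indicator S z * emeasure lborel (T \<inter> {z-1..z+1}) \<partial>lborel)"
    using i4 unfolding i3[symmetric] i2[symmetric] using i1 by (rule order.trans)
  then show ?thesis unfolding a_def[symmetric] T_def[symmetric] .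
qed

lemma emeasure_shift:
  fixes B :: "real set"
  assumes [measurable]: "B \<in> sets borel"
  shows "emeasure lborel {z. z - y \<in> B} = emeasure lborel B"
proof -
  have [measurable]: "{z. z - y \<in> B} \<in> sets borel" by measurable
  have "emeasure lborel {z. z - y \<in> B} = (\<integral>\<^sup>+z. indicator {z. z - y \<in> B} z \<partial>lborel)"
    by simp
  also have "\<dots> = (\<integral>\<^sup>+z. indicator B (z - y) \<partial>lborel)"
    by (intro nn_integral_cong) (auto split: split_indicator)
  also have "\<dots> = ennreal \<bar>1\<bar> * (\<integral>\<^sup>+x. indicator B (y + 1 * x - y) \<partial>lborel)"
    by (rule nn_integral_real_affine) auto
  also have "\<dots> = emeasure lborel B" by simp
  finally show ?thesis .
qed

lemma KL:
  fixes B :: "real set"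
  assumes [measurable]: "B \<in> sets borel" and Bsub: "B \<subseteq> {-1<..<1}"
  shows "1/16 \<le> measure lborel ({y. ennreal (min (measure lborel B) (measure lborel ({-1<..<1} - B)) / 32)
                 \<le> gE B ({-1<..<1} - B) y} \<inter> {-1..1})"
proof -
  define U where "U = {-1<..<1} - B"
  define m where "m = min (measure lborel B) (measure lborel U)"
  define G where "G = {y. ennreal (m / 32) \<le> gE B U y}"
  have [measurable]: "U \<in> sets borel" unfolding U_def by auto
  have Bf: "B \<in> fmeasurable lborel" using Bsub by (intro bnd_fmeas) auto
  have Uf: "U \<in> fmeasurable lborel" unfolding U_def by (intro bnd_fmeas) auto
  have eB: "emeasure lborel B = ennreal (measure lborel B)"
    using Bf by (simp add: emeasure_eq_ennreal_measure fmeasurable_def less_top[symmetric])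
  have eU: "emeasure lborel U = ennreal (measure lborel U)"
    using Uf by (simp add: emeasure_eq_ennreal_measure fmeasurable_def less_top[symmetric])
  have sum2: "measure lborel U = 2 - measure lborel B"
  proof -
    have "measure lborel U = measure lborel {-1<..<1::real} - measure lborel B"
      unfolding U_def using Bsub by (intro measure_Diff) auto
    then show ?thesis by simp
  qed
  have m0: "0 \<le> m" unfolding m_def by simp
  define I where "I = (\<integral>\<^sup>+y. indicator {-1..1} y * gE B U y \<partial>lborel)"
  have I1: "I = (\<integral>\<^sup>+z. indicator U z * emeasure lborel (B \<inter> {z-1..z+1}) \<partial>lborel)"
    unfolding I_def by (rule conv1) auto
  have I2: "I = (\<integral>\<^sup>+w. indicator B w * emeasure lborel (U \<inter> {w-1..w+1}) \<partial>lborel)"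
    unfolding I1 by (rule K_sym) auto
  have Ilow: "ennreal (m / 8) \<le> I"
  proof (cases "measure lborel B \<le> 1")
    case True
    have "ennreal (m / 8) \<le> ennreal (measure lborel B / 8)"
      unfolding m_def by (intro ennreal_leI) auto
    also have "\<dots> \<le> I" unfolding I2 U_def by (rule LB[OF _ Bsub True]) auto
    finally show ?thesis .
  next
    case False
    have Usub: "U \<subseteq> {-1<..<1}" unfolding U_def by auto
    have U1: "measure lborel U \<le> 1" using False sum2 by simp
    have BU: "{-1<..<1} - U = B" unfolding U_def using Bsub by auto
    have "ennreal (m / 8) \<le> ennreal (measure lborel U / 8)"
      unfolding m_def by (intro ennreal_leI) auto
    also have "\<dots> \<le> I" using LB[OF _ Usub U1] unfolding I1 BU by auto
    finally show ?thesis .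
  qed
  have gle: "gE B U y \<le> ennreal m" for y
  proof -
    have "gE B U y \<le> emeasure lborel U"
      unfolding gE_def by (intro emeasure_mono) auto
    moreover have "gE B U y \<le> emeasure lborel {z. z - y \<in> B}"
      unfolding gE_def by (intro emeasure_mono) auto
    ultimately show ?thesis unfolding m_def emeasure_shift[OF assms(1)] eB eU min_def
      by auto
  qed
  have [measurable]: "G \<in> sets borel" unfolding G_def by measurable
  have Gf: "G \<inter> {-1..1} \<in> fmeasurable lborel" by (intro bnd_fmeas) auto
  define \<mu> where "\<mu> = measure lborel (G \<inter> {-1..1})"
  have eG: "emeasure lborel (G \<inter> {-1..1}) = ennreal \<mu>"
    unfolding \<mu>_def using Gf by (simp add: emeasure_eq_ennreal_measure fmeasurable_def less_top[symmetric])
  have "I \<le> (\<integral>\<^sup>+y. ennreal m * indicator (G \<inter> {-1..1}) y + ennreal (m/32) * indicator {-1..1} y \<partial>lborel)"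
    unfolding I_def
  proof (intro nn_integral_mono)
    fix y
    show "indicator {-1..1} y * gE B U y
        \<le> ennreal m * indicator (G \<inter> {-1..1}) y + ennreal (m/32) * indicator {-1..1} y"
    proof (cases "y \<in> G")
      case True
      show ?thesis
      proof (cases "y \<in> {-1..1}")
        case True2: True
        have "indicator {-1..1} y * gE B U y = gE B U y" using True2 by simp
        also have "\<dots> \<le> ennreal m" by (rule gle)
        also have "\<dots> \<le> ennreal m + ennreal (m/32)" by simp
        also have "\<dots> = ennreal m * indicator (G \<inter> {-1..1}) y + ennreal (m/32) * indicator {-1..1} y"
          using True True2 by simp
        finally show ?thesis .
      qed simp
    next
      case False
      then have "gE B U y \<le> ennreal (m/32)" unfolding G_def by auto
      then show ?thesis using False by (auto split: split_indicator)
    qed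
  qed
  also have "\<dots> = ennreal m * ennreal \<mu> + ennreal (m/32) * 2"
    by (subst nn_integral_add) (auto simp: nn_integral_cmult_indicator eG)
  also have "\<dots> = ennreal (m * \<mu> + m / 16)"
  proof -
    have "ennreal (m/32) * 2 = ennreal (m/32) * ennreal 2" by simp
    also have "\<dots> = ennreal (m/32 * 2)" using m0 by (intro ennreal_mult[symmetric]) auto
    also have "\<dots> = ennreal (m/16)" by simp
    finally have a: "ennreal (m/32) * 2 = ennreal (m/16)" .
    have b: "ennreal m * ennreal \<mu> = ennreal (m * \<mu>)" using m0 by (simp add: ennreal_mult \<mu>_def)
    have c: "0 \<le> m * \<mu>" using m0 by (simp add: \<mu>_def)
    show ?thesis unfolding a b using c m0 by (simp add: ennreal_plus[symmetric] del: ennreal_plus)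
  qed
  finally have "ennreal (m / 8) \<le> ennreal (m * \<mu> + m / 16)" using Ilow by (rule order.trans[rotated])
  then have ineq: "m / 8 \<le> m * \<mu> + m / 16"
    using m0 by (subst (asm) ennreal_le_iff) (auto simp: \<mu>_def)
  have "1/16 \<le> \<mu>"
  proof (cases "m = 0")
    case True
    then have "G = UNIV" unfolding G_def by auto
    then show ?thesis unfolding \<mu>_def by simp
  next
    case False
    then have "0 < m" using m0 by linarith
    moreover have "m * (1/16) \<le> m * \<mu>" using ineq by linarith
    ultimately show ?thesis using mult_le_cancel_left_pos by blast
  qed
  then show ?thesis unfolding \<mu>_def G_def m_def U_def .
qed

definition psi :: "real \<Rightarrow> real" where
  "psi b = (if b < 1 then 33 * ln b else 1 - 32 * ln (2 - b))"

lemma psi_mono: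
  assumes "0 < b" "b \<le> b'" "b' < 2"
  shows "psi b \<le> psi b'"
proof (cases "b < 1")
  case True
  have l1: "ln b < 0" using True assms by simp
  show ?thesis
  proof (cases "b' < 1")
    case True
    then show ?thesis using \<open>b < 1\<close> assms unfolding psi_def by simp
  next
    case False
    have "ln (2 - b') \<le> 0" using False assms by simp
    then show ?thesis using False True l1 unfolding psi_def by simp
  qed
next
  case False
  have "ln (2 - b') \<le> ln (2 - b)" using False assms by simp
  then show ?thesis using False assms unfolding psi_def by simp
qed

lemma psi_prog1:
  assumes "0 < b" "b < 1" "33/32 * b \<le> b'" "b' < 2"
  shows "psi b + 1 \<le> psi b'"
proof (cases "b' < 1")
  case True
  have h1: "ln (33/32 :: real) \<ge> 1/33"
    using ln_le_minus_one[of "32/33::real"] by (simp add: ln_div)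
  have h2: "ln (33/32 * b) \<le> ln b'" using assms by (subst ln_le_cancel_iff) auto
  have h3: "ln (33/32 * b) = ln (33/32) + ln b" using assms by (subst ln_mult) auto
  have "psi b = 33 * ln b" "psi b' = 33 * ln b'" using True assms unfolding psi_def by auto
  then show ?thesis using h1 h2 h3 by linarith
next
  case False
  have a: "ln (2 - b') \<le> 0" using False assms by simp
  have b: "ln b < 0" using assms by simp
  have "psi b = 33 * ln b" "psi b' = 1 - 32 * ln (2 - b')" using False assms unfolding psi_def by auto
  then show ?thesis using a b by linarith
qed

lemma psi_prog2:
  assumes "1 \<le> b" "b < 2" "2 - b' \<le> 31/32 * (2 - b)" "b' < 2"
  shows "psi b + 1 \<le> psi b'"
proof -
  have b'1: "1 \<le> b'" using assms by simp
  have h1: "ln (31/32 :: real) \<le> -1/32"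
    using ln_le_minus_one[of "31/32::real"] by simp
  have h2: "ln (2 - b') \<le> ln (31/32 * (2 - b))" using assms by (subst ln_le_cancel_iff) auto
  have h3: "ln (31/32 * (2 - b)) = ln (31/32) + ln (2 - b)" using assms by (subst ln_mult) auto
  have "psi b = 1 - 32 * ln (2 - b)" "psi b' = 1 - 32 * ln (2 - b')" using b'1 assms unfolding psi_def by auto
  then show ?thesis using h1 h2 h3 by linarith
qed

definition Unif :: "real measure" where "Unif = uniform_measure lborel {-1..1}"

lemma prob_Unif: "prob_space Unif"
  unfolding Unif_def by (intro prob_space_uniform_measure) auto

lemma sets_Unif[measurable_cong, simp]: "sets Unif = sets borel"
  and space_Unif[simp]: "space Unif = UNIV"
  unfolding Unif_def by auto

definition Gfun :: "real \<Rightarrow> (nat \<Rightarrow> real) \<Rightarrow> nat \<Rightarrow> ennreal" where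
  "Gfun eps x t = ennreal (if 2 - eps \<le> bm eps x t then 0 else exp (- psi (bm eps x t)))"

lemma meas_B: "measure lborel (AS eps x t \<inter> {-1<..<1}) = bm eps x t"
  unfolding bm_def ..

lemma meas_U: "measure lborel ({-1<..<1} - AS eps x t \<inter> {-1<..<1}) = 2 - bm eps x t"
proof -
  have "measure lborel ({-1<..<1} - AS eps x t \<inter> {-1<..<1}) = measure lborel {-1<..<1::real} - bm eps x t"
    unfolding bm_def by (intro measure_Diff) auto
  then show ?thesis by simp
qed

lemma new_ge:
  "bm eps x t + measure lborel {z. z \<in> {-1<..<1} - AS eps x t \<inter> {-1<..<1} \<and> z - y \<in> AS eps x t \<inter> {-1<..<1}}
     \<le> bm eps (x(Suc t := y)) (Suc t)"
proof -
  define x' where "x' = x(Suc t := y)"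
  define B where "B = AS eps x t \<inter> {-1<..<1}"
  define W where "W = {z. z \<in> {-1<..<1} - B \<and> z - y \<in> B}"
  define N where "N = AS eps x' (Suc t) \<inter> {-1<..<1}"
  have [measurable]: "B \<in> sets borel" unfolding B_def by auto
  have [measurable]: "W \<in> sets borel" unfolding W_def by measurable
  have AS': "AS eps x' t = AS eps x t" unfolding x'_def by (intro AS_cong) auto
  have BN: "B \<subseteq> N" unfolding B_def N_def using AS_mono[of t "Suc t" eps x'] AS' by auto
  have WN: "W \<subseteq> N"
  proof
    fix z assume "z \<in> W"
    then have z1: "z \<in> {-1<..<1}" and z2: "z - y \<in> AS eps x t"
      unfolding W_def B_def by auto
    have "x' (Suc t) = y" unfolding x'_def by simp
    then have z: "z \<in> {-1<..<1}" "z - x' (Suc t) \<in> AS eps x' t"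
      using z1 z2 AS' by auto
    then show "z \<in> N" unfolding N_def using AS_Suc[OF z(2)] by auto
  qed
  have Bf: "B \<in> fmeasurable lborel" unfolding B_def by (rule AS_fmeas)
  have Wf: "W \<in> fmeasurable lborel" unfolding W_def by (intro bnd_fmeas) auto
  have e: "measure lborel (B \<union> W) = measure lborel B + measure lborel W"
    using Bf Wf by (intro measure_Union) (auto simp: fmeasurable_def W_def)
  have l: "measure lborel (B \<union> W) \<le> measure lborel N"
    unfolding N_def using BN WN by (intro measure_mono_fmeasurable AS_fmeas) (auto simp: N_def)
  have "measure lborel B + measure lborel W \<le> measure lborel N" using e l by linarith
  then show ?thesis unfolding N_def B_def W_def x'_def bm_def .
qed

lemma bm_step_ge: "bm eps x t \<le> bm eps (x(Suc t := y)) (Suc t)"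
  using new_ge[of eps x t y] measure_nonneg[of lborel] by (smt (verit))

lemma gE_fin:
  fixes B :: "real set"
  assumes [measurable]: "B \<in> sets borel"
  shows "gE B ({-1<..<1} - B) y = ennreal (measure lborel {z. z \<in> {-1<..<1} - B \<and> z - y \<in> B})"
proof -
  have "{z. z \<in> {-1<..<1} - B \<and> z - y \<in> B} \<in> fmeasurable lborel"
    by (intro bnd_fmeas) auto
  then show ?thesis unfolding gE_def
    by (simp add: emeasure_eq_ennreal_measure fmeasurable_def less_top[symmetric])
qed

lemma PW1:
  assumes eps: "0 < eps" "eps < 1/3" and nd: "bm eps x t < 2 - eps"
  shows "Gfun eps (x(Suc t := y)) (Suc t) \<le> ennreal (exp (- psi (bm eps x t)))"
proof -
  define b where "b = bm eps x t"
  define b' where "b' = bm eps (x(Suc t := y)) (Suc t)"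
  have bb: "b \<le> b'" unfolding b_def b'_def by (rule bm_step_ge)
  have b0: "0 < b" using bm_ge[of eps x t] eps unfolding b_def by simp
  show ?thesis
  proof (cases "2 - eps \<le> b'")
    case True
    then show ?thesis unfolding Gfun_def b'_def by simp
  next
    case False
    then have "psi b \<le> psi b'" using b0 bb eps by (intro psi_mono) auto
    then show ?thesis using False unfolding Gfun_def b'_def[symmetric] b_def[symmetric]
      by (auto intro!: ennreal_leI)
  qed
qed

lemma PW2:
  assumes eps: "0 < eps" "eps < 1/3" and nd: "bm eps x t < 2 - eps"
    and G: "ennreal (min (bm eps x t) (2 - bm eps x t) / 32)
       \<le> gE (AS eps x t \<inter> {-1<..<1}) ({-1<..<1} - AS eps x t \<inter> {-1<..<1}) y"
  shows "Gfun eps (x(Suc t := y)) (Suc t) \<le> ennreal (exp (- psi (bm eps x t)) * exp (-1))"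
proof -
  define b where "b = bm eps x t"
  define b' where "b' = bm eps (x(Suc t := y)) (Suc t)"
  define w where "w = measure lborel {z. z \<in> {-1<..<1} - AS eps x t \<inter> {-1<..<1} \<and> z - y \<in> AS eps x t \<inter> {-1<..<1}}"
  have bw: "b + w \<le> b'" unfolding b_def b'_def w_def by (rule new_ge)
  have w0: "0 \<le> w" unfolding w_def by simp
  have b0: "0 < b" using bm_ge[of eps x t] eps unfolding b_def by simp
  have mw: "min b (2 - b) / 32 \<le> w"
  proof -
    have gf: "gE (AS eps x t \<inter> {-1<..<1}) ({-1<..<1} - AS eps x t \<inter> {-1<..<1}) y = ennreal w"
      unfolding w_def by (intro gE_fin) simp
    show ?thesis using G unfolding gf b_def[symmetric]
      using w0 by (subst (asm) ennreal_le_iff) auto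
  qed
  show ?thesis
  proof (cases "2 - eps \<le> b'")
    case True
    then show ?thesis unfolding Gfun_def b'_def by simp
  next
    case False
    have "psi b + 1 \<le> psi b'"
    proof (cases "b < 1")
      case True
      then have "min b (2 - b) = b" by simp
      then show ?thesis using True b0 bw mw False eps by (intro psi_prog1) auto
    next
      case False2: False
      then have "min b (2 - b) = 2 - b" by simp
      then show ?thesis using False2 bw mw False eps nd unfolding b_def[symmetric] by (intro psi_prog2) auto
    qed
    then have "exp (- psi b') \<le> exp (- psi b) * exp (-1)"
      by (simp add: exp_add[symmetric])
    then show ?thesis using False unfolding Gfun_def b'_def[symmetric] b_def[symmetric]
      by (auto intro!: ennreal_leI)
  qed
qed

lemma exp_m1: "exp (-1::real) \<le> 1/2"
proof -
  have "2 \<le> exp (1::real)" using exp_ge_add_one_self[of 1] by simp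
  then show ?thesis by (simp add: exp_minus field_simps)
qed

lemma SI:
  assumes eps: "0 < eps" "eps < 1/3"
  shows "(\<integral>\<^sup>+y. Gfun eps (x(Suc t := y)) (Suc t) \<partial>Unif) \<le> ennreal (63/64) * Gfun eps x t"
proof (cases "2 - eps \<le> bm eps x t")
  case True
  have "Gfun eps (x(Suc t := y)) (Suc t) = 0" for y
    using True bm_step_ge[of eps x t y] unfolding Gfun_def by simp
  then show ?thesis by simp
next
  case False
  then have nd: "bm eps x t < 2 - eps" by simp
  define b where "b = bm eps x t"
  define K where "K = exp (- psi b)"
  define B where "B = AS eps x t \<inter> {-1<..<1}"
  define G where "G = {y. ennreal (min (measure lborel B) (measure lborel ({-1<..<1} - B)) / 32)
                 \<le> gE B ({-1<..<1} - B) y}"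
  have [measurable]: "B \<in> sets borel" unfolding B_def by simp
  have [measurable]: "G \<in> sets borel" unfolding G_def by measurable
  have mB: "measure lborel B = b" unfolding B_def b_def by (rule meas_B)
  have mU: "measure lborel ({-1<..<1} - B) = 2 - b" unfolding B_def b_def by (rule meas_U)
  have K0: "0 \<le> K" unfolding K_def by simp
  interpret U: prob_space Unif by (rule prob_Unif)
  define P where "P = measure Unif G"
  have P: "P = measure lborel ({-1..1} \<inter> G) / 2"
    unfolding P_def Unif_def by (subst measure_uniform_measure) auto
  have P1: "1/32 \<le> P"
    using KL[of B] unfolding P G_def[symmetric] by (auto simp: B_def Int_commute)
  have P2: "P \<le> 1" unfolding P_def by simp
  have "(\<integral>\<^sup>+y. Gfun eps (x(Suc t := y)) (Suc t) \<partial>Unif)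
     \<le> (\<integral>\<^sup>+y. ennreal K * indicator (UNIV - G) y + ennreal (K * exp (-1)) * indicator G y \<partial>Unif)"
  proof (intro nn_integral_mono)
    fix y
    show "Gfun eps (x(Suc t := y)) (Suc t)
       \<le> ennreal K * indicator (UNIV - G) y + ennreal (K * exp (-1)) * indicator G y"
    proof (cases "y \<in> G")
      case True
      have "Gfun eps (x(Suc t := y)) (Suc t) \<le> ennreal (K * exp (-1))"
        unfolding K_def b_def
        using True eps nd unfolding G_def B_def by (intro PW2) (auto simp: meas_B meas_U)
      then show ?thesis using True by simp
    next
      case False
      have "Gfun eps (x(Suc t := y)) (Suc t) \<le> ennreal K"
        unfolding K_def b_def using eps nd by (intro PW1) auto
      then show ?thesis using False by simp
    qed
  qed
  also have "\<dots> = ennreal K * emeasure Unif (UNIV - G) + ennreal (K * exp (-1)) * emeasure Unif G"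
    by (subst nn_integral_add) (auto simp: nn_integral_cmult_indicator)
  also have "\<dots> = ennreal (K * (1 - P) + K * exp (-1) * P)"
  proof -
    have "emeasure Unif (UNIV - G) = ennreal (1 - P)"
      unfolding P_def using U.prob_compl[of G] by (simp add: U.emeasure_eq_measure)
    moreover have "emeasure Unif G = ennreal P" unfolding P_def by (simp add: U.emeasure_eq_measure)
    ultimately show ?thesis using K0 P2 P1
      by (simp add: ennreal_mult[symmetric] ennreal_plus[symmetric] del: ennreal_plus)
  qed
  also have "\<dots> \<le> ennreal (63/64 * K)"
  proof (intro ennreal_leI)
    have "K * (1 - P) + K * exp (-1) * P = K * (1 - P * (1 - exp (-1)))" by (simp add: algebra_simps)
    also have "\<dots> \<le> K * (63/64)"
    proof (intro mult_left_mono K0)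
      have "1/32 * (1/2) \<le> P * (1 - exp (-1))"
        using P1 exp_m1 by (intro mult_mono) auto
      then show "1 - P * (1 - exp (-1)) \<le> 63/64" by simp
    qed
    finally show "K * (1 - P) + K * exp (-1) * P \<le> 63/64 * K" by simp
  qed
  also have "\<dots> = ennreal (63/64) * Gfun eps x t"
    unfolding Gfun_def K_def b_def using False by (simp add: ennreal_mult[symmetric])
  finally show ?thesis .
qed

abbreviation PP :: "nat \<Rightarrow> (nat \<Rightarrow> real) measure" where
  "PP t \<equiv> PiM {1..t} (\<lambda>_. Unif)"

lemma psi_meas[measurable]: "psi \<in> borel_measurable borel"
  unfolding psi_def by measurable

lemma bm_meas:
  assumes fin: "finite I" and sub: "{1..t} \<subseteq> I"
  shows "(\<lambda>x. bm eps x t) \<in> borel_measurable (PiM I (\<lambda>_. Unif))"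
proof -
  let ?N = "PiM I (\<lambda>_. Unif) \<Otimes>\<^sub>M (lborel :: real measure)"
  have comp: "(\<lambda>p. fst p i) \<in> borel_measurable ?N" if "i \<in> I" for i
  proof -
    have h: "(\<lambda>p. fst p i) \<in> measurable ?N Unif"
      using that by measurable
    have e: "measurable ?N Unif = borel_measurable ?N"
      by (rule measurable_cong_sets) auto
    show ?thesis using h unfolding e .
  qed
  have "Measurable.pred ?N (\<lambda>p. snd p \<in> {-1<..<1} \<and> (\<exists>S\<in>Pow {1..t}. \<bar>snd p - (\<Sum>i\<in>S. fst p i)\<bar> < eps))"
  proof (intro pred_intros_logic pred_intros_finite)
    have pz: "Measurable.pred lborel (\<lambda>z::real. z \<in> {-1<..<1})" by measurable
    show "Measurable.pred ?N (\<lambda>p. snd p \<in> {-1<..<1})"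
      by (rule measurable_compose[OF measurable_snd pz])
    show "finite (Pow {1..t})" by simp
    fix S assume "S \<in> Pow {1..t}"
    then have SI: "S \<subseteq> I" using sub by auto
    have [measurable]: "(\<lambda>p. \<Sum>i\<in>S. fst p i) \<in> borel_measurable ?N"
      using SI by (intro borel_measurable_sum comp) auto
    show "Measurable.pred ?N (\<lambda>p. \<bar>snd p - (\<Sum>i\<in>S. fst p i)\<bar> < eps)" by measurable
  qed
  then have Q: "{p \<in> space ?N. snd p \<in> AS eps (fst p) t \<inter> {-1<..<1}} \<in> sets ?N"
    unfolding AS_def pred_def by (simp add: conj_commute Bex_def)
  have "(\<lambda>x. emeasure lborel (Pair x -` {p \<in> space ?N. snd p \<in> AS eps (fst p) t \<inter> {-1<..<1}}))
      \<in> borel_measurable (PiM I (\<lambda>_. Unif))"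
    by (rule lborel.measurable_emeasure_Pair[OF Q])
  then have "(\<lambda>x. enn2real (emeasure lborel (Pair x -` {p \<in> space ?N. snd p \<in> AS eps (fst p) t \<inter> {-1<..<1}})))
      \<in> borel_measurable (PiM I (\<lambda>_. Unif))"
    by measurable
  then show ?thesis
  proof (rule measurable_cong[THEN iffD1, rotated])
    fix x assume x: "x \<in> space (PiM I (\<lambda>_. Unif))"
    have "Pair x -` {p \<in> space ?N. snd p \<in> AS eps (fst p) t \<inter> {-1<..<1}} = AS eps x t \<inter> {-1<..<1}"
      using x by (auto simp: space_pair_measure)
    then show "enn2real (emeasure lborel (Pair x -` {p \<in> space ?N. snd p \<in> AS eps (fst p) t \<inter> {-1<..<1}}))
        = bm eps x t"
      unfolding bm_def measure_def by simp
  qed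
qed

lemma Gfun_meas:
  assumes fin: "finite I" and sub: "{1..t} \<subseteq> I"
  shows "(\<lambda>x. Gfun eps x t) \<in> borel_measurable (PiM I (\<lambda>_. Unif))"
proof -
  have [measurable]: "(\<lambda>x. bm eps x t) \<in> borel_measurable (PiM I (\<lambda>_. Unif))"
    by (rule bm_meas[OF assms])
  show ?thesis unfolding Gfun_def by measurable
qed

lemma Gfun_bound:
  assumes eps: "0 < eps" "eps < 1/3"
  shows "Gfun eps x t \<le> ennreal (exp (- 33 * ln eps))"
proof -
  define b where "b = bm eps x t"
  have b0: "2 * eps \<le> b" unfolding b_def using eps by (intro bm_ge) auto
  have "33 * ln eps \<le> psi b" if nd: "b < 2 - eps"
  proof (cases "b < 1")
    case True
    have "ln eps \<le> ln b" using b0 eps by simp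
    then show ?thesis using True unfolding psi_def by simp
  next
    case False
    have "ln (2 - b) \<le> 0" using False nd eps by simp
    moreover have "ln eps < 0" using eps by simp
    ultimately show ?thesis using False unfolding psi_def by simp
  qed
  then show ?thesis unfolding Gfun_def b_def[symmetric]
    by (auto intro!: ennreal_leI)
qed

lemma Gfun_int:
  assumes eps: "0 < eps" "eps < 1/3"
  shows "(\<integral>\<^sup>+x. Gfun eps x t \<partial>PP t) \<le> ennreal (exp (- 33 * ln eps) * (63/64)^t)"
proof (induction t)
  case 0
  interpret P0: prob_space "PP 0" by (intro prob_space_PiM prob_Unif)
  have "(\<integral>\<^sup>+x. Gfun eps x 0 \<partial>PP 0) \<le> (\<integral>\<^sup>+x. ennreal (exp (- 33 * ln eps)) \<partial>PP 0)"
    using Gfun_bound[OF eps] by (intro nn_integral_mono) auto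
  also have "\<dots> = ennreal (exp (- 33 * ln eps))"
  proof -
    have e1: "emeasure (PiM {} (\<lambda>_::nat. Unif)) (space (PiM {} (\<lambda>_::nat. Unif))) = 1"
      using P0.emeasure_space_1 by simp
    show ?thesis by (simp add: e1)
  qed
  finally show ?case by simp
next
  case (Suc t)
  interpret product_sigma_finite "\<lambda>_::nat. Unif"
    by (simp add: product_sigma_finite_def prob_space_imp_sigma_finite prob_Unif)
  have ins: "{1..Suc t} = insert (Suc t) {1..t}" by auto
  have "(\<integral>\<^sup>+x. Gfun eps x (Suc t) \<partial>PP (Suc t))
      = (\<integral>\<^sup>+x. (\<integral>\<^sup>+y. Gfun eps (x(Suc t := y)) (Suc t) \<partial>Unif) \<partial>PP t)"
    unfolding ins by (rule product_nn_integral_insert) (auto intro!: Gfun_meas)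
  also have "\<dots> \<le> (\<integral>\<^sup>+x. ennreal (63/64) * Gfun eps x t \<partial>PP t)"
    by (intro nn_integral_mono SI eps)
  also have "\<dots> = ennreal (63/64) * (\<integral>\<^sup>+x. Gfun eps x t \<partial>PP t)"
    by (intro nn_integral_cmult Gfun_meas) auto
  also have "\<dots> \<le> ennreal (63/64) * ennreal (exp (- 33 * ln eps) * (63/64)^t)"
    by (intro mult_left_mono Suc.IH) auto
  also have "\<dots> = ennreal (exp (- 33 * ln eps) * (63/64)^Suc t)"
    by (simp add: ennreal_mult[symmetric] algebra_simps)
  finally show ?case .
qed

lemma tail_bound:
  assumes eps: "0 < eps" "eps < 1/3"
  shows "measure (PP t) {x \<in> space (PP t). bm eps x t < 2 - eps}
      \<le> exp (1 - 65 * ln eps) * (63/64)^t"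
proof -
  interpret Pt: prob_space "PP t" by (intro prob_space_PiM prob_Unif)
  have [measurable]: "(\<lambda>x. bm eps x t) \<in> borel_measurable (PP t)" by (intro bm_meas) auto
  have [measurable]: "(\<lambda>x. Gfun eps x t) \<in> borel_measurable (PP t)" by (intro Gfun_meas) auto
  define A where "A = {x \<in> space (PP t). bm eps x t < 2 - eps}"
  have hA[measurable]: "A \<in> sets (PP t)" unfolding A_def by measurable
  define c where "c = exp (1 - 32 * ln eps)"
  have "emeasure (PP t) A = (\<integral>\<^sup>+x. indicator A x \<partial>PP t)" using hA by simp
  also have "\<dots> \<le> (\<integral>\<^sup>+x. ennreal c * Gfun eps x t \<partial>PP t)"
  proof (intro nn_integral_mono)
    fix x assume "x \<in> space (PP t)"
    show "indicator A x \<le> ennreal c * Gfun eps x t"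
    proof (cases "x \<in> A")
      case True
      define b where "b = bm eps x t"
      have nd: "b < 2 - eps" using True unfolding A_def b_def by auto
      have b0: "0 < b" using bm_ge[of eps x t] eps unfolding b_def by simp
      have "psi b \<le> 1 - 32 * ln eps"
      proof (cases "b < 1")
        case True
        then have "ln b < 0" using b0 by simp
        moreover have "ln eps < 0" using eps by simp
        ultimately show ?thesis using True unfolding psi_def by simp
      next
        case False
        have "ln eps \<le> ln (2 - b)" using nd eps by simp
        then show ?thesis using False unfolding psi_def by simp
      qed
      then have "1 \<le> c * exp (- psi b)"
        unfolding c_def by (simp add: exp_add[symmetric])
      then have "ennreal 1 \<le> ennreal (c * exp (- psi b))" by (rule ennreal_leI)
      then show ?thesis using True nd unfolding Gfun_def b_def[symmetric] c_def
        by (simp add: ennreal_mult[symmetric])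
    qed simp
  qed
  also have "\<dots> = ennreal c * (\<integral>\<^sup>+x. Gfun eps x t \<partial>PP t)"
    by (intro nn_integral_cmult) measurable
  also have "\<dots> \<le> ennreal c * ennreal (exp (- 33 * ln eps) * (63/64)^t)"
    by (intro mult_left_mono Gfun_int eps) auto
  also have "\<dots> = ennreal (exp (1 - 65 * ln eps) * (63/64)^t)"
    unfolding c_def by (simp add: ennreal_mult[symmetric] exp_add[symmetric] algebra_simps)
  finally have "emeasure (PP t) A \<le> ennreal (exp (1 - 65 * ln eps) * (63/64)^t)" .
  then show ?thesis unfolding A_def[symmetric] Pt.emeasure_eq_measure
    by (subst (asm) ennreal_le_iff) auto
qed

lemma final_arith:
  fixes eps :: real and t :: nat
  assumes eps: "0 < eps" "eps < 1/3" and tL: "4352 * ln (1/eps) \<le> real t"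
  shows "exp (1 - 65 * ln eps) * (63/64)^t
       \<le> 2 * exp (- (1 / (64 * real t)) * (real t - 4352 * ln (1/eps))^2)"
proof -
  define L where "L = ln (1/eps)"
  have Leq: "ln eps = - L" unfolding L_def using eps by (simp add: ln_div)
  have "ln eps \<le> eps - 1" using ln_le_minus_one[OF eps(1)] .
  then have L23: "2/3 \<le> L" using eps Leq by simp
  have tpos: "0 < real t" using tL L23 unfolding L_def[symmetric] by simp
  have q: "(63/64::real) \<le> exp (-1/64)" using exp_ge_add_one_self[of "-1/64::real"] by simp
  have "(63/64::real)^t \<le> exp (-1/64)^t" by (intro power_mono q) auto
  also have "\<dots> = exp (- real t / 64)" by (simp add: exp_of_nat_mult[symmetric])
  finally have qt: "(63/64::real)^t \<le> exp (- real t / 64)" .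
  have "exp (1 - 65 * ln eps) * (63/64)^t \<le> exp (1 + 65 * L) * exp (- real t / 64)"
  proof -
    have e: "exp (1 - 65 * ln eps) = exp (1 + 65 * L)" unfolding Leq by simp
    show ?thesis unfolding e by (rule mult_left_mono[OF qt]) simp
  qed
  also have "\<dots> = exp (1 + 65 * L - real t / 64)" by (simp add: exp_add[symmetric])
  also have "\<dots> \<le> exp (- (1 / (64 * real t)) * (real t - 4352 * L)^2)"
  proof (intro exp_mono)
    define d where "d = real t - 4352 * L"
    have d0: "0 \<le> d" using tL unfolding d_def L_def by simp
    have dt: "d \<le> real t" using L23 unfolding d_def by simp
    have "d^2 \<le> d * real t" unfolding power2_eq_square using d0 dt by (intro mult_left_mono) auto
    then have "d^2 / (64 * real t) \<le> d * real t / (64 * real t)"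
      using tpos by (intro divide_right_mono) auto
    also have "\<dots> = d / 64" using tpos by simp
    finally have "d^2 / (64 * real t) \<le> d / 64" .
    then have "- (1 / (64 * real t)) * d^2 \<ge> - d / 64" by simp
    moreover have "1 + 65 * L - real t / 64 \<le> - d / 64" unfolding d_def using L23 by simp
    ultimately show "1 + 65 * L - real t / 64 \<le> - (1 / (64 * real t)) * (real t - 4352 * L)^2"
      unfolding d_def by linarith
  qed
  also have "\<dots> \<le> 2 * exp (- (1 / (64 * real t)) * (real t - 4352 * L)^2)" by simp
  finally show ?thesis unfolding L_def .
qed

lemma main_bound:
  fixes eps :: real and M :: "'a measure" and X :: "nat \<Rightarrow> 'a \<Rightarrow> real" and t :: nat
  assumes eps: "0 < eps" "eps < 1/3" and PM: "prob_space M"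
    and meas: "\<forall>i\<ge>1. X i \<in> borel_measurable M"
    and ind: "prob_space.indep_vars M (\<lambda>_. borel) X {1..}"
    and dist: "\<forall>i\<ge>1. distr M borel (X i) = uniform_measure lborel {-1..1}"
    and t1: "1 \<le> t"
  shows "measure M {\<omega> \<in> space M. tau eps X \<omega> \<le> enat t}
      \<ge> 1 - exp (1 - 65 * ln eps) * (63/64)^t"
proof -
  interpret prob_space M by (rule PM)
  define I where "I = {1..t}"
  define F where "F = (\<lambda>\<omega>. \<lambda>i\<in>I. X i \<omega>)"
  have In: "I \<noteq> {}" unfolding I_def using t1 by auto
  have rv: "\<And>i. i \<in> I \<Longrightarrow> random_variable borel (X i)" using meas unfolding I_def by auto
  have indI: "indep_vars (\<lambda>_. borel) X I"
    using ind unfolding I_def by (rule indep_vars_subset) auto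
  have D: "distr M (PiM I (\<lambda>_. borel)) F = PiM I (\<lambda>i. distr M borel (X i))"
    using indep_vars_iff_distr_eq_PiM'[OF In rv] indI unfolding F_def by simp
  also have "\<dots> = PP t"
    unfolding I_def by (intro PiM_cong refl) (auto simp: Unif_def dist)
  finally have D2: "distr M (PiM I (\<lambda>_. borel)) F = PP t" .
  have Fm: "F \<in> measurable M (PiM I (\<lambda>_. borel))"
    unfolding F_def using rv by measurable
  define A where "A = {x \<in> space (PP t). bm eps x t < 2 - eps}"
  have bmm[measurable]: "(\<lambda>x. bm eps x t) \<in> borel_measurable (PP t)" by (intro bm_meas) auto
  have A1: "A \<in> sets (PP t)" unfolding A_def by measurable
  have sE: "sets (PP t) = sets (PiM I (\<lambda>_. borel))" unfolding I_def by (rule sets_PiM_cong) auto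
  have AS: "A \<in> sets (PiM I (\<lambda>_. borel))" using A1 unfolding sE .
  have bmF: "bm eps (\<lambda>i. X i \<omega>) t = bm eps (F \<omega>) t" for \<omega>
    unfolding bm_def F_def I_def by (subst AS_cong[of t "\<lambda>i. X i \<omega>"]) auto
  have FA: "F -` A \<inter> space M = {\<omega> \<in> space M. bm eps (\<lambda>i. X i \<omega>) t < 2 - eps}"
    unfolding A_def bmF by (auto simp: space_PiM F_def I_def Unif_def)
  have ev: "{\<omega> \<in> space M. bm eps (\<lambda>i. X i \<omega>) t < 2 - eps} \<in> events"
    unfolding FA[symmetric] using Fm AS by (rule measurable_sets)
  have "prob {\<omega> \<in> space M. bm eps (\<lambda>i. X i \<omega>) t < 2 - eps} = measure (PP t) A"
    unfolding FA[symmetric] D2[symmetric] using Fm AS by (simp add: measure_distr)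
  also have "\<dots> \<le> exp (1 - 65 * ln eps) * (63/64)^t"
    unfolding A_def by (rule tail_bound[OF eps])
  finally have pb: "prob {\<omega> \<in> space M. bm eps (\<lambda>i. X i \<omega>) t < 2 - eps} \<le> exp (1 - 65 * ln eps) * (63/64)^t" .
  have "{\<omega> \<in> space M. tau eps X \<omega> \<le> enat t}
      = space M - {\<omega> \<in> space M. bm eps (\<lambda>i. X i \<omega>) t < 2 - eps}"
    by (auto simp: tau_iff_bm[OF eps])
  then have "prob {\<omega> \<in> space M. tau eps X \<omega> \<le> enat t}
      = 1 - prob {\<omega> \<in> space M. bm eps (\<lambda>i. X i \<omega>) t < 2 - eps}"
    using prob_compl[OF ev] by simp
  then show ?thesis using pb by simp
qed

theorem lemma7:
  shows "\<exists>C'>0. \<exists>\<kappa>>0. \<forall>(eps::real) (M::'a measure) (X::nat \<Rightarrow> 'a \<Rightarrow> real).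
    (0 < eps \<and> eps < 1/3 \<and> prob_space M \<and>
     (\<forall>i\<ge>1. X i \<in> borel_measurable M) \<and>
     prob_space.indep_vars M (\<lambda>_. borel) X {1..} \<and>
     (\<forall>i\<ge>1. distr M borel (X i) = uniform_measure lborel {-1..1}))
    \<longrightarrow> (\<forall>t::nat. real t \<ge> C' * ln (1/eps) \<longrightarrow>
          measure M {\<omega> \<in> space M. tau eps X \<omega> \<le> enat t}
            \<ge> 1 - 2 * exp (- (1 / (\<kappa> * real t)) * (real t - C' * ln (1/eps))^2))"
proof -
  have key: "measure M {\<omega> \<in> space M. tau eps X \<omega> \<le> enat t}
      \<ge> 1 - 2 * exp (- (1 / (64 * real t)) * (real t - 4352 * ln (1/eps))^2)"
    if H: "0 < eps \<and> eps < 1/3 \<and> prob_space M \<and>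
     (\<forall>i\<ge>1. X i \<in> borel_measurable M) \<and>
     prob_space.indep_vars M (\<lambda>_. borel) X {1..} \<and>
     (\<forall>i\<ge>1. distr M borel (X i) = uniform_measure lborel {-1..1})"
     and tL: "real t \<ge> 4352 * ln (1/eps)"
    for eps :: real and M :: "'a measure" and X :: "nat \<Rightarrow> 'a \<Rightarrow> real" and t :: nat
  proof -
    have eps: "0 < eps" "eps < 1/3" using H by auto
    have "0 < ln (1/eps)" using eps by simp
    then have t1: "1 \<le> t" using tL by (cases t) auto
    have "measure M {\<omega> \<in> space M. tau eps X \<omega> \<le> enat t} \<ge> 1 - exp (1 - 65 * ln eps) * (63/64)^t"
      using H t1 by (intro main_bound) auto
    moreover have "exp (1 - 65 * ln eps) * (63/64)^t
         \<le> 2 * exp (- (1 / (64 * real t)) * (real t - 4352 * ln (1/eps))^2)"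
      by (rule final_arith[OF eps tL])
    ultimately show ?thesis by simp
  qed
  show ?thesis
    apply (rule exI[of _ "4352"])
    apply (rule conjI, simp)
    apply (rule exI[of _ "64"])
    apply (rule conjI, simp)
    apply (intro allI impI)
    apply (rule key)
     apply assumption+
    done
qed

end
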